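(* Let $R>0$ and $\phi\in C_c^\infty(\mathbb R)$ be non-negative and even with $\mathrm{supp}(\phi)=[-R,R]$ and $\phi>0$ on $(-R,R)$; let $\psi(x)=\int_{-\infty}^xy\phi(y)\,dy$. Let $N\in\mathbb N$, weights $\omega^i\in[0,1]$ with $\sum_i\omega^i=1$, and $x_0^i\in\mathbb R$ with $\sup_{i,j}|x_0^i-x_0^j|<R$. For $i=1,\dots,N$ let $x^i$ be the unique global solutions of $$\frac{d}{dt}x^i=-\sum_{j=1}^N\omega^j\psi'(x^i-x^j),\qquad x^i(0)=x_0^i.$$ Then there exists a constant $K>0$ depending only on $\psi$ such that $|x^i(t)-x^j(t)|\ge|x_0^i-x_0^j|e^{-Kt}$ for all $i,j=1,\dots,N$ and all $t>0$. *)

theory Defs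
  imports "HOL-Analysis.Analysis"
begin

definition smooth_real :: "(real \<Rightarrow> real) \<Rightarrow> bool" where
  "smooth_real f \<longleftrightarrow> (\<forall>k x. ((deriv ^^ k) f) differentiable (at x))"

definition supp_real :: "(real \<Rightarrow> real) \<Rightarrow> real set" where
  "supp_real f = closure {x. f x \<noteq> 0}"

end

theory Submission
  imports Defs
begin

lemma phi_facts:
  fixes \<phi> :: "real \<Rightarrow> real" and R :: real
  assumes smooth: "smooth_real \<phi>"
    and supp: "supp_real \<phi> = {-R..R}"
  shows phi_zero: "\<And>y. R < \<bar>y\<bar> \<Longrightarrow> \<phi> y = 0"
    and phi_cont: "\<And>y. isCont \<phi> y"
    and phi_der: "\<And>y. (\<phi> has_real_derivative deriv \<phi> y) (at y)"
    and dphi_cont: "\<And>y. isCont (deriv \<phi>) y"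
proof -
  show z: "\<phi> y = 0" if "R < \<bar>y\<bar>" for y
  proof (rule ccontr)
    assume "\<phi> y \<noteq> 0"
    then have "y \<in> {x. \<phi> x \<noteq> 0}" by simp
    then have "y \<in> supp_real \<phi>" unfolding supp_real_def by (rule closure_subset[THEN subsetD])
    with supp that show False by auto
  qed
  have d0: "\<phi> differentiable (at y)" for y
    using smooth unfolding smooth_real_def by (metis funpow_0)
  have d1: "deriv \<phi> differentiable (at y)" for y
    using smooth unfolding smooth_real_def by (metis One_nat_def funpow.simps(2) funpow_0 o_apply)
  show "isCont \<phi> y" for y using d0 differentiable_imp_continuous_within by blast
  show "(\<phi> has_real_derivative deriv \<phi> y) (at y)" for y
    using d0 DERIV_deriv_iff_real_differentiable by blast
  show "isCont (deriv \<phi>) y" for y using d1 differentiable_imp_continuous_within by blast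
qed


lemma g_lip:
  fixes \<phi> :: "real \<Rightarrow> real" and R :: real
  assumes smooth: "smooth_real \<phi>"
    and supp: "supp_real \<phi> = {-R..R}"
  shows "\<exists>B>0. \<forall>a b. \<bar>a * \<phi> a - b * \<phi> b\<bar> \<le> B * \<bar>a - b\<bar>"
proof -
  note F = phi_facts[OF smooth supp]
  define g' where "g' = (\<lambda>y. \<phi> y + y * deriv \<phi> y)"
  have gd: "((\<lambda>y. y * \<phi> y) has_real_derivative g' y) (at y)" for y
    unfolding g'_def by (auto intro!: derivative_eq_intros F(3))
  have gci: "isCont g' y" for y
    unfolding g'_def by (intro isCont_add isCont_mult continuous_ident F(2) F(4))
  have gc: "continuous_on {-R..R} g'"
    using gci by (intro continuous_at_imp_continuous_on ballI) auto
  have "compact (g' ` {-R..R})" by (rule compact_continuous_image[OF gc]) auto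
  then have "bounded (g' ` {-R..R})" by (rule compact_imp_bounded)
  then obtain B where B: "B > 0" "\<And>y. y \<in> g' ` {-R..R} \<Longrightarrow> norm y \<le> B"
    unfolding bounded_pos by blast
  have dz: "deriv \<phi> y = 0" if "R < \<bar>y\<bar>" for y
  proof -
    have eqS: "{z::real. R < \<bar>z\<bar>} = {..<-R} \<union> {R<..}" by auto
    have "open {z::real. R < \<bar>z\<bar>}"
      unfolding eqS by (intro open_Un open_lessThan open_greaterThan)
    have "((\<lambda>_. 0) has_real_derivative 0) (at y)" by simp
    then have "(\<phi> has_real_derivative 0) (at y)"
      by (rule has_field_derivative_transform_within_open[OF _ \<open>open _\<close>, where a=y])
         (use that F(1) in auto)
    then show ?thesis using F(3) DERIV_unique by blast
  qed
  have gb: "\<bar>g' y\<bar> \<le> B" for y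
  proof (cases "R < \<bar>y\<bar>")
    case True
    have p1: "\<phi> y = 0" by (rule F(1)) (rule True)
    have p2: "deriv \<phi> y = 0" by (rule dz) (rule True)
    have "g' y = 0" unfolding g'_def p1 p2 by simp
    then show ?thesis using B(1) by simp
  next
    case False then have "y \<in> {-R..R}" by auto
    then show ?thesis using B(2)[of "g' y"] by auto
  qed
  have main: "\<bar>b * \<phi> b - a * \<phi> a\<bar> \<le> B * \<bar>b - a\<bar>" if ab: "a < b" for a b
  proof -
    obtain z where "a < z" "z < b" and eq: "b * \<phi> b - a * \<phi> a = (b - a) * g' z"
      using MVT2[OF ab gd] by blast
    have "\<bar>b * \<phi> b - a * \<phi> a\<bar> = (b - a) * \<bar>g' z\<bar>" using eq ab by (simp add: abs_mult)
    also have "\<dots> \<le> (b - a) * B" using gb[of z] ab by (intro mult_left_mono) auto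
    also have "\<dots> = B * \<bar>b - a\<bar>" using ab by simp
    finally show ?thesis .
  qed
  show ?thesis
  proof (intro exI[of _ B] conjI allI B(1))
    fix a b :: real
    show "\<bar>a * \<phi> a - b * \<phi> b\<bar> \<le> B * \<bar>a - b\<bar>"
    proof (cases a b rule: linorder_cases)
      case less
      have "\<bar>a * \<phi> a - b * \<phi> b\<bar> = \<bar>b * \<phi> b - a * \<phi> a\<bar>" by (rule abs_minus_commute)
      also have "\<dots> \<le> B * \<bar>b - a\<bar>" using main[OF less] .
      also have "\<dots> = B * \<bar>a - b\<bar>" by (simp only: abs_minus_commute)
      finally show ?thesis .
    next
      case greater then show ?thesis using main[of b a] by blast
    qed (use B(1) in simp)
  qed
qed

lemma dpsi:
  fixes \<phi> \<psi> :: "real \<Rightarrow> real" and R :: real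
  assumes smooth: "smooth_real \<phi>"
    and supp: "supp_real \<phi> = {-R..R}"
    and psi_def: "\<And>x. \<psi> x = integral {..x} (\<lambda>y. y * \<phi> y)"
  shows "deriv \<psi> z = z * \<phi> z"
proof -
  note F = phi_facts[OF smooth supp]
  define g where "g = (\<lambda>y::real. y * \<phi> y)"
  have gci: "isCont g y" for y
    unfolding g_def by (intro isCont_mult continuous_ident F(2))
  have gc: "continuous_on S g" for S
    using gci by (intro continuous_at_imp_continuous_on ballI) auto
  have gz: "g y = 0" if "y < - \<bar>R\<bar>" for y using F(1)[of y] that by (auto simp: g_def)
  define a where "a = - \<bar>R\<bar> - 2"
  have psi_eq: "\<psi> y = integral {a..y} g" if "a \<le> y" for y
  proof -
    have I: "(g has_integral integral {a..y} g) {a..y}"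
      using integrable_continuous_interval[OF gc] by (rule integrable_integral)
    let ?h = "\<lambda>u. if u \<in> {..y} then g u else 0"
    have "(?h has_integral integral {a..y} g) {a..y}"
      using I by (subst has_integral_cong[where g = g]) auto
    then have "(?h has_integral integral {a..y} g) UNIV"
      by (rule has_integral_on_superset) (use gz a_def in auto)
    then have "(g has_integral integral {a..y} g) {..y}"
      by (simp only: has_integral_restrict_UNIV)
    then show ?thesis unfolding psi_def g_def[symmetric] by (rule integral_unique)
  qed
  have "(\<psi> has_real_derivative g z) (at z)"
  proof (cases "a + 1 < z")
    case True
    have "((\<lambda>x. integral {a..x} g) has_real_derivative g z) (at z within {a..z+1})"
      using True by (intro integral_has_real_derivative gc) auto
    then have d: "((\<lambda>x. integral {a..x} g) has_real_derivative g z) (at z)"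
      using True by (simp add: at_within_Icc_at)
    show ?thesis
      by (rule has_field_derivative_transform_within_open[OF d, of "{a<..}"])
         (use True psi_eq in auto)
  next
    case False
    have p0: "\<psi> y = 0" if "y < a + 3/2" for y
    proof -
      have "integral {..y} g = integral {..y} (\<lambda>_. 0)"
        by (rule integral_cong) (use that gz a_def in auto)
      then show ?thesis unfolding psi_def g_def by simp
    qed
    have gz0: "g z = 0" using False gz a_def by auto
    have "(\<psi> has_real_derivative 0) (at z)"
      by (rule has_field_derivative_transform_within_open[of "\<lambda>_. 0" 0 z "{..<a+3/2}"])
         (use False p0 in auto)
    then show ?thesis using gz0 by simp
  qed
  then show ?thesis unfolding g_def by (rule DERIV_imp_deriv)
qed

theorem lemma4p25:
  fixes \<phi> \<psi> :: "real \<Rightarrow> real" and R :: real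
  assumes R_pos: "R > 0"
    and smooth: "smooth_real \<phi>"
    and nonneg: "\<And>y. \<phi> y \<ge> 0"
    and even: "\<And>y. \<phi> (- y) = \<phi> y"
    and supp: "supp_real \<phi> = {-R..R}"
    and pos: "\<And>y. -R < y \<Longrightarrow> y < R \<Longrightarrow> \<phi> y > 0"
    and psi_def: "\<And>x. \<psi> x = integral {..x} (\<lambda>y. y * \<phi> y)"
  shows "\<exists>K>0. \<forall>(N::nat) (\<omega>::nat \<Rightarrow> real) (x0::nat \<Rightarrow> real) (x::nat \<Rightarrow> real \<Rightarrow> real).
           (\<forall>i<N. 0 \<le> \<omega> i \<and> \<omega> i \<le> 1) \<and> (\<Sum>i<N. \<omega> i) = 1 \<and>
           (\<forall>i<N. \<forall>j<N. \<bar>x0 i - x0 j\<bar> < R) \<and>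
           (\<forall>i<N. x i 0 = x0 i \<and>
              (\<forall>t\<ge>0. (x i has_real_derivative
                  (- (\<Sum>j<N. \<omega> j * deriv \<psi> (x i t - x j t)))) (at t within {0..})))
           \<longrightarrow> (\<forall>i<N. \<forall>j<N. \<forall>t>0. \<bar>x i t - x j t\<bar> \<ge> \<bar>x0 i - x0 j\<bar> * exp (- K * t))"
proof -
  obtain B where B: "B > 0" and lip: "\<And>a b. \<bar>a * \<phi> a - b * \<phi> b\<bar> \<le> B * \<bar>a - b\<bar>"
    using g_lip[OF smooth supp] by blast
  have dps: "\<And>z. deriv \<psi> z = z * \<phi> z" by (rule dpsi[OF smooth supp psi_def])
  define g where "g = (\<lambda>y::real. y * \<phi> y)"
  have lipg: "\<bar>g a - g b\<bar> \<le> B * \<bar>a - b\<bar>" for a b unfolding g_def by (rule lip)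
  show ?thesis
  proof (rule exI[of _ B], rule conjI[OF B], (rule allI)+, rule impI)
    fix N :: nat and \<omega> :: "nat \<Rightarrow> real" and x0 :: "nat \<Rightarrow> real" and x :: "nat \<Rightarrow> real \<Rightarrow> real"
    assume H: "(\<forall>i<N. 0 \<le> \<omega> i \<and> \<omega> i \<le> 1) \<and> (\<Sum>i<N. \<omega> i) = 1 \<and>
           (\<forall>i<N. \<forall>j<N. \<bar>x0 i - x0 j\<bar> < R) \<and>
           (\<forall>i<N. x i 0 = x0 i \<and>
              (\<forall>t\<ge>0. (x i has_real_derivative
                  (- (\<Sum>j<N. \<omega> j * deriv \<psi> (x i t - x j t)))) (at t within {0..})))"
    have w0: "\<And>k. k < N \<Longrightarrow> 0 \<le> \<omega> k" using H by blast
    have w1: "(\<Sum>k<N. \<omega> k) = 1" using H by blast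
    have init: "\<And>i. i < N \<Longrightarrow> x i 0 = x0 i" using H by blast
    have der: "\<And>i s. i < N \<Longrightarrow> 0 \<le> s \<Longrightarrow> (x i has_real_derivative
                  (- (\<Sum>k<N. \<omega> k * g (x i s - x k s)))) (at s within {0..})"
      using H unfolding g_def dps by blast
    show "\<forall>i<N. \<forall>j<N. \<forall>t>0. \<bar>x0 i - x0 j\<bar> * exp (- B * t) \<le> \<bar>x i t - x j t\<bar>"
    proof (intro allI impI)
      fix i j :: nat and t :: real
      assume i: "i < N" and j: "j < N" and t: "0 < t"
      define d where "d = (\<lambda>s. x i s - x j s)"
      define D where "D = (\<lambda>s. (- (\<Sum>k<N. \<omega> k * g (x i s - x k s))) - (- (\<Sum>k<N. \<omega> k * g (x j s - x k s))))"
      have dd: "(d has_real_derivative D s) (at s within {0..})" if "0 \<le> s" for s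
        unfolding d_def D_def by (intro DERIV_diff der i j that)
      have Db: "\<bar>D s\<bar> \<le> B * \<bar>d s\<bar>" for s
      proof -
        have "D s = (\<Sum>k<N. \<omega> k * (g (x j s - x k s) - g (x i s - x k s)))"
          unfolding D_def by (simp add: sum_subtractf[symmetric] right_diff_distrib)
        then have "\<bar>D s\<bar> \<le> (\<Sum>k<N. \<bar>\<omega> k * (g (x j s - x k s) - g (x i s - x k s))\<bar>)"
          by (simp only: sum_abs)
        also have "\<dots> \<le> (\<Sum>k<N. \<omega> k * (B * \<bar>d s\<bar>))"
        proof (rule sum_mono)
          fix k assume "k \<in> {..<N}"
          then have wk: "0 \<le> \<omega> k" using w0 by auto
          have "\<bar>g (x j s - x k s) - g (x i s - x k s)\<bar> \<le> B * \<bar>(x j s - x k s) - (x i s - x k s)\<bar>"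
            by (rule lipg)
          also have "\<dots> = B * \<bar>d s\<bar>" unfolding d_def by (simp add: abs_minus_commute)
          finally have "\<bar>g (x j s - x k s) - g (x i s - x k s)\<bar> \<le> B * \<bar>d s\<bar>" .
          then show "\<bar>\<omega> k * (g (x j s - x k s) - g (x i s - x k s))\<bar> \<le> \<omega> k * (B * \<bar>d s\<bar>)"
            using wk by (simp add: abs_mult mult_left_mono)
        qed
        also have "\<dots> = (\<Sum>k<N. \<omega> k) * (B * \<bar>d s\<bar>)" by (simp only: sum_distrib_right)
        also have "\<dots> = B * \<bar>d s\<bar>" using w1 by simp
        finally show ?thesis .
      qed
      define F where "F = (\<lambda>s. (d s)^2 * exp (2 * B * s))"
      define F' where "F' = (\<lambda>s. 2 * d s * D s * exp (2 * B * s) + (d s)^2 * (2 * B * exp (2 * B * s)))"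
      have Fd: "(F has_real_derivative F' s) (at s within {0..t})" if "0 \<le> s" for s
      proof -
        have "(F has_real_derivative F' s) (at s within {0..})"
          unfolding F_def F'_def
          by (rule derivative_eq_intros dd[OF that] refl | simp)+
        then show ?thesis by (rule has_field_derivative_subset) auto
      qed
      have F'nn: "0 \<le> F' s" for s
      proof -
        have "- (d s * D s) \<le> \<bar>d s\<bar> * \<bar>D s\<bar>" by (simp add: abs_mult[symmetric])
        also have "\<dots> \<le> \<bar>d s\<bar> * (B * \<bar>d s\<bar>)" using Db[of s] by (intro mult_left_mono) auto
        also have "\<dots> = B * (d s)^2" by (simp add: power2_eq_square abs_mult_self_eq)
        finally have h: "- (d s * D s) \<le> B * (d s)^2" .
        have e: "2 * d s * D s + (d s)^2 * (2 * B) = 2 * (d s * D s) + 2 * (B * (d s)^2)"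
          by (simp add: algebra_simps)
        have "0 \<le> 2 * d s * D s + (d s)^2 * (2 * B)" unfolding e using h by linarith
        then have "0 \<le> (2 * d s * D s + (d s)^2 * (2 * B)) * exp (2 * B * s)" by simp
        then show ?thesis unfolding F'_def by (simp add: algebra_simps)
      qed
      have "\<exists>\<xi>\<in>{0..t}. F t - F 0 = F' \<xi> * (t - 0)"
        by (rule mvt_very_simple[of 0 t F "\<lambda>s. (*) (F' s)"])
           (use t Fd in \<open>auto simp: has_field_derivative_def\<close>)
      then obtain \<xi> where "\<xi> \<in> {0..t}" and mv: "F t - F 0 = F' \<xi> * (t - 0)" by blast
      have "0 \<le> F' \<xi> * (t - 0)" using F'nn[of \<xi>] t by simp
      then have "F 0 \<le> F t" using mv by linarith
      then have key: "(x0 i - x0 j)^2 \<le> (d t)^2 * exp (2 * B * t)"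
        unfolding F_def d_def using init i j by simp
      have m2: "- (2 * B * t) = (- B * t) + (- B * t)" by (simp add: algebra_simps)
      have e2: "exp (- (2 * B * t)) = exp (- B * t) * exp (- B * t)" unfolding m2 by (rule exp_add)
      have "(\<bar>x0 i - x0 j\<bar> * exp (- B * t))^2 = (x0 i - x0 j)^2 * (exp (- B * t) * exp (- B * t))"
        by (simp add: power_mult_distrib power2_eq_square)
      also have "\<dots> = (x0 i - x0 j)^2 * exp (- (2 * B * t))" unfolding e2 ..
      also have "\<dots> \<le> (d t)^2 * exp (2 * B * t) * exp (- (2 * B * t))"
        using key by (intro mult_right_mono) auto
      also have "\<dots> = (d t)^2" by (simp add: exp_minus field_simps)
      also have "\<dots> = \<bar>d t\<bar>^2" by simp
      finally have "(\<bar>x0 i - x0 j\<bar> * exp (- B * t))^2 \<le> \<bar>d t\<bar>^2" .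
      then have "\<bar>x0 i - x0 j\<bar> * exp (- B * t) \<le> \<bar>d t\<bar>"
        by (rule power2_le_imp_le) simp
      then show "\<bar>x0 i - x0 j\<bar> * exp (- B * t) \<le> \<bar>x i t - x j t\<bar>" unfolding d_def .
    qed
  qed
qed

end
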